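(* Let $l\ge2$, $a=(a_1,\dots,a_l)$ with all $a_i>0$, and $b=(b_1,\dots,b_l)$ with all $b_i\neq0$, the $b_i$ pairwise distinct, and $b_{i_1}b_{j_1}<0$ for some $i_1\ne j_1$. Let $\bar s(l,a,b)\in\{1,2,\dots\}\cup\{\infty\}$ be the minimal integer $s\ge1$ such that the system $$\sum_{i=1}^l a_ib_i^uc_i^{u+1}=0,\qquad u=0,1,\dots,s,$$ has no real solution $(c_1,\dots,c_l)$ with at least one $c_i\neq0$ ($\bar s=\infty$ if no such $s$ exists). Then: (a) if $\sum_{i\in I}a_i\prod_{j\in I\setminus\{i\}}b_j\neq0$ for every subset $I\subseteq\{1,\dots,l\}$ with $|I|\ge2$, then $\bar s(l,a,b)\le l-1$; (b) if $\sum_{i\in I}a_i\prod_{j\in I\setminus\{i\}}b_j=0$ for some subset $I$ with $|I|\ge2$, then $\bar s(l,a,b)=\infty$; (c) under the hypothesis of (a): if $l=2$ then $\bar s(l,a,b)=1$; if $l=3$ and $\sum_{i=1}^3a_i\prod_{j\neq i}b_j>0$ then $\bar s(l,a,b)=1$, while if $l=3$ and $\sum_{i=1}^3a_i\prod_{j\neq i}b_j<0$ then $\bar s(l,a,b)=2$. *)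

theory Defs
  imports Main "HOL-Library.Extended_Nat"
begin

text \<open>Vectors a, b, c in R^l are represented as functions nat => real, indices 1..l.\<close>

definition has_nontriv_sol :: "nat \<Rightarrow> (nat \<Rightarrow> real) \<Rightarrow> (nat \<Rightarrow> real) \<Rightarrow> nat \<Rightarrow> bool" where
  "has_nontriv_sol l a b s \<longleftrightarrow>
     (\<exists>c :: nat \<Rightarrow> real. (\<exists>i\<in>{1..l}. c i \<noteq> 0) \<and>
        (\<forall>u\<le>s. (\<Sum>i=1..l. a i * b i ^ u * c i ^ (u + 1)) = 0))"

definition sbar :: "nat \<Rightarrow> (nat \<Rightarrow> real) \<Rightarrow> (nat \<Rightarrow> real) \<Rightarrow> enat" where
  "sbar l a b =
     (if \<exists>s::nat. s \<ge> 1 \<and> \<not> has_nontriv_sol l a b s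
      then enat (LEAST s::nat. s \<ge> 1 \<and> \<not> has_nontriv_sol l a b s)
      else \<infinity>)"

definition Sigma_ab :: "nat set \<Rightarrow> (nat \<Rightarrow> real) \<Rightarrow> (nat \<Rightarrow> real) \<Rightarrow> real" where
  "Sigma_ab I a b = (\<Sum>i\<in>I. a i * (\<Prod>j\<in>I - {i}. b j))"

end

theory Submission
  imports Defs
begin
lemma key:
  fixes w x :: "nat \<Rightarrow> real"
  shows "finite S \<Longrightarrow> card (x`S - {0}) \<le> n \<Longrightarrow> (\<forall>k\<in>{1..n}. (\<Sum>i\<in>S. w i * x i ^ k) = 0)
     \<Longrightarrow> y \<noteq> 0 \<Longrightarrow> (\<Sum>i\<in>{i\<in>S. x i = y}. w i) = 0"
proof (induction n arbitrary: S w y)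
  case 0
  then have "x`S - {0} = {}" by simp
  then have "{i\<in>S. x i = y} = {}" using 0 by auto
  then show ?case by (metis sum.empty)
next
  case (Suc n)
  show ?case
  proof (cases "y \<in> x`S")
    case False
    then have "{i\<in>S. x i = y} = {}" by auto
    then show ?thesis by (metis sum.empty)
  next
    case True
    show ?thesis
    proof (cases "\<exists>y0\<in>x`S - {0}. y0 \<noteq> y")
      case True
      then obtain y0 where y0: "y0 \<in> x`S - {0}" "y0 \<noteq> y" by blast
      define S' where "S' = {i\<in>S. x i \<noteq> y0}"
      define w' where "w' = (\<lambda>i. w i * (x i - y0))"
      have fS': "finite S'" using Suc.prems(1) by (simp add: S'_def)
      have "x`S' - {0} \<subseteq> (x`S - {0}) - {y0}" by (auto simp: S'_def)
      hence "card (x`S' - {0}) \<le> card ((x`S - {0}) - {y0})"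
        by (intro card_mono) (use Suc.prems(1) in auto)
      also have "\<dots> = card (x`S - {0}) - 1" using y0 Suc.prems(1) by (simp add: card_Diff_singleton)
      finally have cS': "card (x`S' - {0}) \<le> n" using Suc.prems(2) by linarith
      have eqs: "\<forall>k\<in>{1..n}. (\<Sum>i\<in>S'. w' i * x i ^ k) = 0"
      proof
        fix k assume k: "k \<in> {1..n}"
        have "(\<Sum>i\<in>S'. w' i * x i ^ k) = (\<Sum>i\<in>S. w' i * x i ^ k)"
          by (rule sum.mono_neutral_left) (use Suc.prems(1) in \<open>auto simp: S'_def w'_def\<close>)
        also have "\<dots> = (\<Sum>i\<in>S. w i * x i ^ Suc k) - y0 * (\<Sum>i\<in>S. w i * x i ^ k)"
          by (simp add: w'_def sum_subtractf sum_distrib_left algebra_simps)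
        also have "\<dots> = 0"
        proof -
          have "Suc k \<in> {1..Suc n}" "k \<in> {1..Suc n}" using k by auto
          then show ?thesis using Suc.prems(3) by (metis mult_zero_right diff_self)
        qed
        finally show "(\<Sum>i\<in>S'. w' i * x i ^ k) = 0" .
      qed
      have "(\<Sum>i\<in>{i\<in>S'. x i = y}. w' i) = 0"
        using Suc.IH[OF fS' cS' eqs Suc.prems(4)] .
      moreover have "{i\<in>S'. x i = y} = {i\<in>S. x i = y}" using y0 by (auto simp: S'_def)
      moreover have "(\<Sum>i\<in>{i\<in>S. x i = y}. w' i) = (y - y0) * (\<Sum>i\<in>{i\<in>S. x i = y}. w i)"
        by (simp add: w'_def sum_distrib_left mult.commute)
      ultimately show ?thesis using y0 by simp
    next
      case False
      have "(\<Sum>i\<in>S. w i * x i) = (\<Sum>i\<in>{i\<in>S. x i = y}. w i * x i)"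
        by (rule sum.mono_neutral_right) (use Suc.prems(1) False in auto)
      also have "\<dots> = y * (\<Sum>i\<in>{i\<in>S. x i = y}. w i)"
        by (simp add: sum_distrib_left mult.commute)
      finally have e: "(\<Sum>i\<in>S. w i * x i) = y * (\<Sum>i\<in>{i\<in>S. x i = y}. w i)" .
      have "(1::nat) \<in> {1..Suc n}" by simp
      hence "(\<Sum>i\<in>S. w i * x i ^ 1) = 0" using Suc.prems(3) by blast
      then show ?thesis using e Suc.prems(4) by simp
    qed
  qed
qed

lemma conv:
  fixes a b c :: real
  assumes "b \<noteq> 0"
  shows "a * b ^ u * c ^ (u+1) = (a / b) * (b * c) ^ (u+1)"
  using assms by (simp add: power_mult_distrib field_simps)

lemma Sigma_w:
  assumes "finite I" "\<forall>i\<in>I. b i \<noteq> 0"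
  shows "Sigma_ab I a b = (\<Prod>j\<in>I. b j) * (\<Sum>i\<in>I. a i / b i)"
  unfolding Sigma_ab_def sum_distrib_left
proof (rule sum.cong[OF refl])
  fix i assume i: "i \<in> I"
  have "(\<Prod>j\<in>I. b j) = b i * (\<Prod>j\<in>I - {i}. b j)" using prod.remove[OF assms(1) i] .
  then show "a i * (\<Prod>j\<in>I - {i}. b j) = (\<Prod>j\<in>I. b j) * (a i / b i)"
    using assms(2) i by simp
qed

lemma prod_nz: "finite I \<Longrightarrow> \<forall>i\<in>I. b i \<noteq> (0::real) \<Longrightarrow> (\<Prod>j\<in>I. b j) \<noteq> 0"
  by simp

lemma nosol:
  fixes l :: nat and a b :: "nat \<Rightarrow> real"
  assumes "\<forall>i\<in>{1..l}. a i > 0"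
    and "\<forall>i\<in>{1..l}. b i \<noteq> 0"
    and A: "\<forall>I. I \<subseteq> {1..l} \<and> card I \<ge> 2 \<longrightarrow> Sigma_ab I a b \<noteq> 0"
    and "l \<ge> 1"
  shows "\<not> has_nontriv_sol l a b (l - 1)"
proof
  assume "has_nontriv_sol l a b (l - 1)"
  then obtain c i0 where i0: "i0 \<in> {1..l}" "c i0 \<noteq> 0"
    and eq: "\<forall>u\<le>l-1. (\<Sum>i=1..l. a i * b i ^ u * c i ^ (u + 1)) = 0"
    unfolding has_nontriv_sol_def by blast
  define w where "w = (\<lambda>i. a i / b i)"
  define x where "x = (\<lambda>i. b i * c i)"
  have eqs: "\<forall>k\<in>{1..l}. (\<Sum>i\<in>{1..l}. w i * x i ^ k) = 0"
  proof
    fix k assume k: "k \<in> {1..l}"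
    then obtain u where ku: "k = u + 1" "u \<le> l - 1" by (metis Suc_eq_plus1 atLeastAtMost_iff le_diff_conv2 le_add_diff_inverse2 le_numeral_extra(4) diff_le_mono)
    with eq have "(\<Sum>i=1..l. a i * b i ^ u * c i ^ (u + 1)) = 0" by blast
    moreover have "(\<Sum>i=1..l. a i * b i ^ u * c i ^ (u + 1)) = (\<Sum>i\<in>{1..l}. w i * x i ^ k)"
      unfolding ku(1) w_def x_def
      by (rule sum.cong[OF refl], rule conv) (use assms(2) in auto)
    ultimately show "(\<Sum>i\<in>{1..l}. w i * x i ^ k) = 0" by simp
  qed
  have cardV: "card (x ` {1..l} - {0}) \<le> l"
  proof -
    have "card (x ` {1..l} - {0}) \<le> card (x ` {1..l})" by (intro card_mono) auto
    also have "\<dots> \<le> card {1..l}" by (rule card_image_le) simp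
    finally show ?thesis by simp
  qed
  have y: "x i0 \<noteq> 0" using i0 assms(2) by (simp add: x_def)
  define I where "I = {i\<in>{1..l}. x i = x i0}"
  have s0: "(\<Sum>i\<in>I. w i) = 0" unfolding I_def
    by (rule key[OF _ cardV eqs y]) simp
  have i0I: "i0 \<in> I" using i0 by (simp add: I_def)
  have fI: "finite I" "I \<subseteq> {1..l}" by (auto simp: I_def)
  show False
  proof (cases "card I \<ge> 2")
    case True
    have "Sigma_ab I a b = 0" using Sigma_w[OF fI(1), of b a] s0 fI(2) assms(2)
      by (auto simp: w_def)
    with A True fI show False by blast
  next
    case False
    have "card I \<ge> 1" using fI i0I by (metis One_nat_def Suc_leI card_gt_0_iff empty_iff)
    with False have "card I = 1" by simp
    then obtain j where "I = {j}" by (meson card_1_singletonE)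
    with i0I have "I = {i0}" by simp
    with s0 have "a i0 / b i0 = 0" by (simp add: w_def)
    moreover have "a i0 > 0" "b i0 \<noteq> 0" using assms(1,2) i0(1) by auto
    ultimately show False by simp
  qed
qed

lemma allsol:
  fixes l :: nat and a b :: "nat \<Rightarrow> real"
  assumes "\<forall>i\<in>{1..l}. b i \<noteq> 0"
    and I: "I \<subseteq> {1..l}" "card I \<ge> 2" "Sigma_ab I a b = 0"
  shows "has_nontriv_sol l a b s"
proof -
  have fI: "finite I" using I(1) finite_subset by blast
  have bI: "\<forall>i\<in>I. b i \<noteq> 0" using assms(1) I(1) by blast
  have sw: "(\<Sum>i\<in>I. a i / b i) = 0"
    using Sigma_w[OF fI bI, of a] I(3) prod_nz[OF fI bI] by simp
  obtain i0 where i0: "i0 \<in> I" using I(2) by (metis card.empty ex_in_conv not_numeral_le_zero)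
  define c where "c = (\<lambda>i. if i \<in> I then 1 / b i else 0)"
  have "c i0 \<noteq> 0" using i0 bI by (simp add: c_def)
  moreover have "\<forall>u\<le>s. (\<Sum>i=1..l. a i * b i ^ u * c i ^ (u + 1)) = 0"
  proof (intro allI impI)
    fix u
    have "(\<Sum>i=1..l. a i * b i ^ u * c i ^ (u + 1)) = (\<Sum>i\<in>I. a i * b i ^ u * c i ^ (u + 1))"
      by (rule sum.mono_neutral_right) (use I(1) in \<open>auto simp: c_def\<close>)
    also have "\<dots> = (\<Sum>i\<in>I. a i / b i)"
      by (rule sum.cong[OF refl]) (use bI in \<open>auto simp: c_def power_divide field_simps\<close>)
    finally show "(\<Sum>i=1..l. a i * b i ^ u * c i ^ (u + 1)) = 0" using sw by simp
  qed
  ultimately show ?thesis unfolding has_nontriv_sol_def using i0 I(1) by blast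
qed

lemma sbar_le: "s \<ge> 1 \<Longrightarrow> \<not> has_nontriv_sol l a b s \<Longrightarrow> sbar l a b \<le> enat s"
  unfolding sbar_def by (auto intro: Least_le)

lemma sbar_ge1: "sbar l a b \<ge> 1"
proof (cases "\<exists>s::nat. s \<ge> 1 \<and> \<not> has_nontriv_sol l a b s")
  case True
  then have "(LEAST s::nat. s \<ge> 1 \<and> \<not> has_nontriv_sol l a b s) \<ge> 1"
    by (metis (mono_tags, lifting) LeastI)
  then show ?thesis using True unfolding sbar_def by (simp add: one_enat_def)
qed (auto simp: sbar_def)

lemma sbar_ge2: "has_nontriv_sol l a b 1 \<Longrightarrow> sbar l a b \<ge> 2"
proof (cases "\<exists>s::nat. s \<ge> 1 \<and> \<not> has_nontriv_sol l a b s")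
  case True
  assume h: "has_nontriv_sol l a b 1"
  have "(LEAST s::nat. s \<ge> 1 \<and> \<not> has_nontriv_sol l a b s) \<ge> 1"
       "\<not> has_nontriv_sol l a b (LEAST s::nat. s \<ge> 1 \<and> \<not> has_nontriv_sol l a b s)"
    using LeastI_ex[OF True] by auto
  with h have "(LEAST s::nat. s \<ge> 1 \<and> \<not> has_nontriv_sol l a b s) \<ge> 2"
    by (metis le_antisym not_less_eq_eq one_add_one plus_1_eq_Suc)
  then show ?thesis using True unfolding sbar_def by (simp add: numeral_eq_enat)
qed (auto simp: sbar_def)

lemma sbar_inf: "(\<forall>s. has_nontriv_sol l a b s) \<Longrightarrow> sbar l a b = \<infinity>"
  unfolding sbar_def by auto

lemma R1:
  fixes w1 w2 w3 x1 x2 x3 :: real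
  assumes "w3 \<noteq> 0" "w1*w2*w3*(w1+w2+w3) > 0"
    and e1: "w1*x1+w2*x2+w3*x3 = 0" and e2: "w1*x1^2+w2*x2^2+w3*x3^2 = 0"
  shows "x1 = 0 \<and> x2 = 0 \<and> x3 = 0"
proof -
  define A where "A = w1*(w1+w3)"
  define B where "B = w1*w2"
  define C where "C = w2*(w2+w3)"
  have x3: "w3*x3 = -(w1*x1+w2*x2)" using e1 by linarith
  have "w3*(w1*x1^2+w2*x2^2+w3*x3^2) = w3*w1*x1^2+w3*w2*x2^2+(w3*x3)^2"
    by (simp add: power2_eq_square algebra_simps)
  also have "\<dots> = A*x1^2+2*B*x1*x2+C*x2^2" unfolding x3 A_def B_def C_def
    by (simp add: power2_eq_square algebra_simps)
  finally have Q: "A*x1^2+2*B*x1*x2+C*x2^2 = 0" using e2 by simp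
  have D: "A*C - B^2 = w1*w2*w3*(w1+w2+w3)" unfolding A_def B_def C_def
    by (simp add: power2_eq_square algebra_simps)
  have "A*(A*x1^2+2*B*x1*x2+C*x2^2) = (A*x1+B*x2)^2 + (A*C-B^2)*x2^2"
    by (simp add: power2_eq_square algebra_simps)
  hence S: "(A*x1+B*x2)^2 + (A*C-B^2)*x2^2 = 0" using Q by simp
  have pos: "A*C - B^2 > 0" using D assms(2) by simp
  have n1: "(A*x1+B*x2)^2 \<ge> 0" by simp
  have n2: "(A*C-B^2)*x2^2 \<ge> 0" using pos by simp
  have "(A*C-B^2)*x2^2 = 0"
    using S n1 n2 by linarith
  hence x2: "x2 = 0" using pos by simp
  have "A \<noteq> 0" proof assume "A = 0" then show False using pos by (simp add: power2_eq_square) qed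
  moreover have "(A*x1)^2 = 0" using S x2 by simp
  ultimately have x1: "x1 = 0" by simp
  from x3 x1 x2 assms(1) have "x3 = 0" by simp
  with x1 x2 show ?thesis by simp
qed

lemma R2:
  fixes w1 w2 w3 :: real
  assumes "w3 \<noteq> 0" "w1 \<noteq> 0" "w2 \<noteq> 0" "w1*w2*w3*(w1+w2+w3) < 0"
  shows "\<exists>x1 x2 x3. (x1 \<noteq> 0 \<or> x2 \<noteq> 0) \<and> w1*x1+w2*x2+w3*x3 = 0 \<and> w1*x1^2+w2*x2^2+w3*x3^2 = 0"
proof -
  define A where "A = w1*(w1+w3)"
  define B where "B = w1*w2"
  define C where "C = w2*(w2+w3)"
  have D: "B^2 - A*C = -(w1*w2*w3*(w1+w2+w3))" unfolding A_def B_def C_def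
    by (simp add: power2_eq_square algebra_simps)
  hence Dp: "B^2 - A*C > 0" using assms(4) by simp
  obtain x1 x2 where nz: "x1 \<noteq> 0 \<or> x2 \<noteq> 0" and Q: "A*x1^2+2*B*x1*x2+C*x2^2 = 0"
  proof (cases "A = 0")
    case True
    show ?thesis by (rule that[of 1 0]) (simp_all add: True)
  next
    case False
    define r where "r = (-B + sqrt (B^2 - A*C)) / A"
    have sq: "(sqrt (B^2 - A*C))^2 = B^2 - A*C" using Dp by simp
    have "A*r^2+2*B*r*1+C*1^2 = 0"
    proof -
      have "A*r = -B + sqrt (B^2 - A*C)" using False by (simp add: r_def)
      hence "A*(A*r^2+2*B*r*1+C*1^2) = (A*r)^2 + 2*B*(A*r) + A*C"
        by (simp add: power2_eq_square algebra_simps)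
      also have "\<dots> = 0" unfolding \<open>A*r = _\<close> using sq
        by (simp add: power2_eq_square algebra_simps)
      finally show ?thesis using False by simp
    qed
    then show ?thesis by (rule that[of r 1, rotated]) simp
  qed
  define x3 where "x3 = -(w1*x1+w2*x2)/w3"
  have x3: "w3*x3 = -(w1*x1+w2*x2)" using assms(1) by (simp add: x3_def)
  have e1: "w1*x1+w2*x2+w3*x3 = 0" using x3 by simp
  have "w3*(w1*x1^2+w2*x2^2+w3*x3^2) = w3*w1*x1^2+w3*w2*x2^2+(w3*x3)^2"
    by (simp add: power2_eq_square algebra_simps)
  also have "\<dots> = A*x1^2+2*B*x1*x2+C*x2^2" unfolding x3 A_def B_def C_def
    by (simp add: power2_eq_square algebra_simps)
  finally have "w1*x1^2+w2*x2^2+w3*x3^2 = 0" using Q assms(1) by simp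
  with e1 nz show ?thesis by blast
qed

lemma eq3:
  fixes a b c :: "nat \<Rightarrow> real"
  assumes "b 1 \<noteq> 0" "b 2 \<noteq> 0" "b 3 \<noteq> (0::real)"
  shows "(\<Sum>i=1..3. a i * b i ^ u * c i ^ (u+1)) =
     (a 1/b 1)*(b 1*c 1)^(u+1) + (a 2/b 2)*(b 2*c 2)^(u+1) + (a 3/b 3)*(b 3*c 3)^(u+1)"
proof -
  have s: "{1..3::nat} = {1,2,3}" by auto
  have "(\<Sum>i=1..3. a i * b i ^ u * c i ^ (u+1)) = a 1 * b 1 ^ u * c 1 ^ (u+1) + a 2 * b 2 ^ u * c 2 ^ (u+1) + a 3 * b 3 ^ u * c 3 ^ (u+1)"
    unfolding s by (simp add: add.assoc del: power_Suc)
  then show ?thesis by (simp only: conv[OF assms(1)] conv[OF assms(2)] conv[OF assms(3)])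
qed

lemma Sig3:
  fixes a b c :: "nat \<Rightarrow> real"
  assumes "b 1 \<noteq> 0" "b 2 \<noteq> 0" "b 3 \<noteq> (0::real)"
  shows "Sigma_ab {1..3} a b = b 1 * b 2 * b 3 * (a 1/b 1 + a 2/b 2 + a 3/b 3)"
proof -
  have s: "{1..3::nat} = {1,2,3}" by auto
  have "\<forall>i\<in>{1..3::nat}. b i \<noteq> 0" unfolding s using assms by auto
  from Sigma_w[OF _ this, of a] show ?thesis unfolding s by (simp add: algebra_simps)
qed

lemma sign3:
  fixes a b c :: "nat \<Rightarrow> real"
  assumes "b 1 \<noteq> 0" "b 2 \<noteq> 0" "b 3 \<noteq> (0::real)"
  shows "(a 1/b 1)*(a 2/b 2)*(a 3/b 3)*(a 1/b 1 + a 2/b 2 + a 3/b 3)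
        = a 1 * a 2 * a 3 * Sigma_ab {1..3} a b / (b 1 * b 2 * b 3)^2"
  unfolding Sig3[OF assms] using assms by (simp add: field_simps power2_eq_square)

lemma l3_pos:
  fixes a b :: "nat \<Rightarrow> real"
  assumes "\<forall>i\<in>{1..3}. a i > (0::real)" "\<forall>i\<in>{1..3}. b i \<noteq> 0" "Sigma_ab {1..3} a b > 0"
  shows "\<not> has_nontriv_sol 3 a b 1"
proof
  assume "has_nontriv_sol 3 a b 1"
  then obtain c i0 where i0: "i0 \<in> {1..3}" "c i0 \<noteq> 0"
    and eq: "\<forall>u\<le>1. (\<Sum>i=1..3. a i * b i ^ u * c i ^ (u + 1)) = 0"
    unfolding has_nontriv_sol_def by blast
  have b: "b 1 \<noteq> 0" "b 2 \<noteq> 0" "b 3 \<noteq> 0" using assms(2) by auto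
  have a: "a 1 > 0" "a 2 > 0" "a 3 > 0" using assms(1) by auto
  have e0: "(a 1/b 1)*(b 1*c 1) + (a 2/b 2)*(b 2*c 2) + (a 3/b 3)*(b 3*c 3) = 0"
    using eq[rule_format, of 0] eq3[OF b, of a 0 c] by simp
  have e1: "(a 1/b 1)*(b 1*c 1)^2 + (a 2/b 2)*(b 2*c 2)^2 + (a 3/b 3)*(b 3*c 3)^2 = 0"
    using eq[rule_format, of 1] eq3[OF b, of a 1 c] by (simp add: numeral_2_eq_2)
  have "a 1 * a 2 * a 3 * Sigma_ab {1..3} a b / (b 1 * b 2 * b 3)^2 > 0"
    using a assms(3) b by simp
  hence pos: "(a 1/b 1)*(a 2/b 2)*(a 3/b 3)*(a 1/b 1 + a 2/b 2 + a 3/b 3) > 0"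
    using sign3[OF b, of a] by simp
  have "b 1*c 1 = 0 \<and> b 2*c 2 = 0 \<and> b 3*c 3 = 0"
    by (rule R1[OF _ pos e0 e1]) (use a b in simp)
  hence "c 1 = 0" "c 2 = 0" "c 3 = 0" using b by auto
  moreover have "i0 = 1 \<or> i0 = 2 \<or> i0 = 3" using i0 by auto
  ultimately show False using i0 by auto
qed

lemma l3_neg:
  fixes a b :: "nat \<Rightarrow> real"
  assumes "\<forall>i\<in>{1..3}. a i > (0::real)" "\<forall>i\<in>{1..3}. b i \<noteq> 0" "Sigma_ab {1..3} a b < 0"
  shows "has_nontriv_sol 3 a b 1"
proof -
  have b: "b 1 \<noteq> 0" "b 2 \<noteq> 0" "b 3 \<noteq> 0" using assms(2) by auto
  have a: "a 1 > 0" "a 2 > 0" "a 3 > 0" using assms(1) by auto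
  have "a 1 * a 2 * a 3 * Sigma_ab {1..3} a b / (b 1 * b 2 * b 3)^2 < 0"
    using a assms(3) b by (simp add: divide_neg_pos mult_pos_neg)
  hence neg: "(a 1/b 1)*(a 2/b 2)*(a 3/b 3)*(a 1/b 1 + a 2/b 2 + a 3/b 3) < 0"
    using sign3[OF b, of a] by simp
  obtain x1 x2 x3 where nz: "x1 \<noteq> 0 \<or> x2 \<noteq> 0"
    and e0: "(a 1/b 1)*x1 + (a 2/b 2)*x2 + (a 3/b 3)*x3 = 0"
    and e1: "(a 1/b 1)*x1^2 + (a 2/b 2)*x2^2 + (a 3/b 3)*x3^2 = 0"
    using R2[OF _ _ _ neg] a b by auto
  define c where "c = (\<lambda>i::nat. if i = 1 then x1 / b 1 else if i = 2 then x2 / b 2 else x3 / b 3)"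
  have c: "b 1 * c 1 = x1" "b 2 * c 2 = x2" "b 3 * c 3 = x3" using b by (auto simp: c_def)
  have "\<forall>u\<le>1. (\<Sum>i=1..3. a i * b i ^ u * c i ^ (u + 1)) = 0"
  proof (intro allI impI)
    fix u :: nat assume "u \<le> 1"
    hence "u = 0 \<or> u = 1" by auto
    then show "(\<Sum>i=1..3. a i * b i ^ u * c i ^ (u + 1)) = 0"
      using eq3[OF b, of a u c] e0 e1 unfolding c by (auto simp: numeral_2_eq_2)
  qed
  moreover have "\<exists>i\<in>{1..3}. c i \<noteq> 0"
  proof (cases "x1 = 0")
    case True
    then have "c 2 \<noteq> 0" using nz c(2) by auto
    then show ?thesis by (intro bexI[of _ 2]) auto
  next
    case False
    then have "c 1 \<noteq> 0" using c(1) by auto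
    then show ?thesis by (intro bexI[of _ 1]) auto
  qed
  ultimately show ?thesis unfolding has_nontriv_sol_def by blast
qed

theorem propositionF1:
  fixes l :: nat and a b :: "nat \<Rightarrow> real"
  assumes "l \<ge> 2"
    and "\<forall>i\<in>{1..l}. a i > 0"
    and "\<forall>i\<in>{1..l}. b i \<noteq> 0"
    and "inj_on b {1..l}"
    and "\<exists>i1\<in>{1..l}. \<exists>j1\<in>{1..l}. i1 \<noteq> j1 \<and> b i1 * b j1 < 0"
  shows "((\<forall>I. I \<subseteq> {1..l} \<and> card I \<ge> 2 \<longrightarrow> Sigma_ab I a b \<noteq> 0)
            \<longrightarrow> sbar l a b \<le> enat (l - 1))
       \<and> ((\<exists>I. I \<subseteq> {1..l} \<and> card I \<ge> 2 \<and> Sigma_ab I a b = 0)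
            \<longrightarrow> sbar l a b = \<infinity>)
       \<and> ((\<forall>I. I \<subseteq> {1..l} \<and> card I \<ge> 2 \<longrightarrow> Sigma_ab I a b \<noteq> 0)
            \<longrightarrow> (l = 2 \<longrightarrow> sbar l a b = 1)
              \<and> (l = 3 \<and> Sigma_ab {1..3} a b > 0 \<longrightarrow> sbar l a b = 1)
              \<and> (l = 3 \<and> Sigma_ab {1..3} a b < 0 \<longrightarrow> sbar l a b = 2))"
proof (intro conjI impI)
  assume A: "\<forall>I. I \<subseteq> {1..l} \<and> card I \<ge> 2 \<longrightarrow> Sigma_ab I a b \<noteq> 0"
  have na: "\<not> has_nontriv_sol l a b (l - 1)"
    by (rule nosol[OF assms(2,3) A]) (use assms(1) in simp)
  show "sbar l a b \<le> enat (l - 1)"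
    by (rule sbar_le[OF _ na]) (use assms(1) in simp)
next
  assume "\<exists>I. I \<subseteq> {1..l} \<and> card I \<ge> 2 \<and> Sigma_ab I a b = 0"
  then obtain I where "I \<subseteq> {1..l}" "card I \<ge> 2" "Sigma_ab I a b = 0" by blast
  then have "\<forall>s. has_nontriv_sol l a b s" using allsol[OF assms(3)] by blast
  then show "sbar l a b = \<infinity>" by (rule sbar_inf)
next
  assume A: "\<forall>I. I \<subseteq> {1..l} \<and> card I \<ge> 2 \<longrightarrow> Sigma_ab I a b \<noteq> 0"
  have na: "\<not> has_nontriv_sol l a b (l - 1)"
    by (rule nosol[OF assms(2,3) A]) (use assms(1) in simp)
  have le: "sbar l a b \<le> enat (l - 1)"
    by (rule sbar_le[OF _ na]) (use assms(1) in simp)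
  {
    assume "l = 2"
    with le have "sbar l a b \<le> 1" by (simp add: one_enat_def)
    with sbar_ge1[of l a b] show "sbar l a b = 1" by (metis antisym)
  }
  {
    assume h: "l = 3 \<and> Sigma_ab {1..3} a b > 0"
    have "\<not> has_nontriv_sol 3 a b 1" by (rule l3_pos) (use assms(2,3) h in auto)
    hence "sbar 3 a b \<le> enat 1" using sbar_le[of 1 3 a b] by blast
    hence "sbar l a b \<le> 1" using h by (simp add: one_enat_def)
    with sbar_ge1[of l a b] show "sbar l a b = 1" by (metis antisym)
  }
  {
    assume h: "l = 3 \<and> Sigma_ab {1..3} a b < 0"
    have "has_nontriv_sol 3 a b 1" by (rule l3_neg) (use assms(2,3) h in auto)
    hence "sbar 3 a b \<ge> 2" by (rule sbar_ge2)
    hence g: "sbar l a b \<ge> 2" using h by simp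
    have "enat (l - 1) = 2" using h by (simp add: numeral_eq_enat)
    hence "sbar l a b \<le> 2" using le by simp
    with g show "sbar l a b = 2" by (metis antisym)
  }
qed

end
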